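(* Let $S$ be a finite Rhodes semisimple semigroup and let $\Omega$ be a finite semisimple partial $S$-set. Then the action of $S$ on $\Omega$ is faithful if and only if, for each $\mathsf{RM}$-irreducible $\mathscr J$-class $J$ of $S$: (1) $\Omega_J\neq\emptyset$; and (2) $\Omega_Je_J$ is a faithful $M_J$-set.
   Context: All semigroups are finite and act on the right. $\mathscr J$-classes are ordered by $J'\le J$ iff $S^1J'S^1\subseteq S^1JS^1$; a $\mathscr J$-class is regular if it contains an idempotent. For each regular $\mathscr J$-class $J$ fix an idempotent $e_J\in J$ and let $G_J$ be its maximal subgroup. For a regular $\mathscr J$-class $J$: $s\equiv_J t$ iff for all $x,y\in J$, $xsy\in J\iff xty\in J$, and if both lie in $J$ then $xsy=xty$; $s\equiv_{\mathsf{RM},J}t$ iff for all $x\in J$, $xs\in J\iff xt\in J$, and if both lie in $J$ then $xs=xt$. $S$ is Rhodes semisimple if $\bigcap_J\equiv_J$ (over regular $J$) is the equality relation. A regular $J$ is $\mathsf{RM}$-irreducible if $\bigcap_{J'<J}\equiv_{\mathsf{RM},J'}\not\subseteq\equiv_{\mathsf{RM},J}$ (over regular $J'<J$; empty intersection is universal). For such $J$, $M_J=\{g\in G_J\mid g\equiv_{\mathsf{RM},J'}e_J\ \forall\text{ regular }J'<J\}$. A partial $S$-set is a finite set $\Omega$ with a right action of $S$ by partial maps (equalities of possibly undefined expressions mean both undefined or both defined and equal); it is faithful if distinct elements act as distinct partial maps. The strong orbit of $\alpha$ is $\{\beta\in\Omega\mid \alpha S^1=\beta S^1\}$; it is null if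 $\mathscr O S\cap\mathscr O=\emptyset$ and transitive otherwise. $\Omega$ is semisimple if every strong orbit is transitive and $S$-invariant (if $\alpha\in\mathscr O$ and $\alpha s$ is defined then $\alpha s\in\mathscr O$). Each such strong orbit $\mathscr O$ is a partial $S$-set in its own right, and there is a unique minimal $\mathscr J$-class $J$ with $\mathscr O s\neq\emptyset$ for some $s\in J$; it is regular and called the apex of $\mathscr O$. $\Omega_J$ denotes the union of the strong orbits with apex $J$, and $\Omega_Je_J=\{\alpha e_J\mid\alpha\in\Omega_J,\ \alpha e_J \text{ defined}\}$, on which $G_J$ acts by permutations. *)

theory Defs
  imports Main
begin

text \<open>A finite semigroup is modelled by a type of class semigroup_mult and finite;
  the semigroup S is UNIV. Elements of S^1 are handled by writing out the four cases.\<close>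

definition ideal2 :: "'a::semigroup_mult set \<Rightarrow> 'a set" where
  "ideal2 A = A \<union> {x * a | x a. a \<in> A} \<union> {a * y | a y. a \<in> A}
              \<union> {x * a * y | x a y. a \<in> A}"

definition rideal :: "'a::semigroup_mult \<Rightarrow> 'a set" where
  "rideal a = {a} \<union> {a * y | y. True}"

definition lideal :: "'a::semigroup_mult \<Rightarrow> 'a set" where
  "lideal a = {a} \<union> {x * a | x. True}"

definition Jclass :: "'a::semigroup_mult \<Rightarrow> 'a set" where
  "Jclass a = {b. ideal2 {b} = ideal2 {a}}"

definition is_Jclass :: "'a::semigroup_mult set \<Rightarrow> bool" where
  "is_Jclass J \<longleftrightarrow> (\<exists>a. J = Jclass a)"

definition Jle :: "'a::semigroup_mult set \<Rightarrow> 'a set \<Rightarrow> bool" where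
  "Jle J' J \<longleftrightarrow> ideal2 J' \<subseteq> ideal2 J"

definition Jless :: "'a::semigroup_mult set \<Rightarrow> 'a set \<Rightarrow> bool" where
  "Jless J' J \<longleftrightarrow> Jle J' J \<and> J' \<noteq> J"

definition regularJ :: "'a::semigroup_mult set \<Rightarrow> bool" where
  "regularJ J \<longleftrightarrow> is_Jclass J \<and> (\<exists>e\<in>J. e * e = e)"

definition Hgroup :: "'a::semigroup_mult \<Rightarrow> 'a set" where
  "Hgroup e = {g. rideal g = rideal e \<and> lideal g = lideal e}"

definition equivJ :: "'a::semigroup_mult set \<Rightarrow> 'a \<Rightarrow> 'a \<Rightarrow> bool" where
  "equivJ J s t \<longleftrightarrow> (\<forall>x\<in>J. \<forall>y\<in>J. (x * s * y \<in> J \<longleftrightarrow> x * t * y \<in> J)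
                       \<and> (x * s * y \<in> J \<longrightarrow> x * s * y = x * t * y))"

definition equivRM :: "'a::semigroup_mult set \<Rightarrow> 'a \<Rightarrow> 'a \<Rightarrow> bool" where
  "equivRM J s t \<longleftrightarrow> (\<forall>x\<in>J. (x * s \<in> J \<longleftrightarrow> x * t \<in> J)
                       \<and> (x * s \<in> J \<longrightarrow> x * s = x * t))"

definition rhodes_semisimple :: "'a::semigroup_mult itself \<Rightarrow> bool" where
  "rhodes_semisimple _ \<longleftrightarrow>
     (\<forall>s t::'a. (\<forall>J. regularJ J \<longrightarrow> equivJ J s t) \<longrightarrow> s = t)"

definition RM_irreducible :: "'a::semigroup_mult set \<Rightarrow> bool" where
  "RM_irreducible J \<longleftrightarrow> regularJ J \<and>
     \<not> (\<forall>s t. (\<forall>J'. regularJ J' \<and> Jless J' J \<longrightarrow> equivRM J' s t) \<longrightarrow> equivRM J s t)"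

definition MJ :: "('a::semigroup_mult set \<Rightarrow> 'a) \<Rightarrow> 'a set \<Rightarrow> 'a set" where
  "MJ e J = {g \<in> Hgroup (e J). \<forall>J'. regularJ J' \<and> Jless J' J \<longrightarrow> equivRM J' g (e J)}"

definition partial_Sset :: "'b set \<Rightarrow> ('b \<Rightarrow> 'a::semigroup_mult \<Rightarrow> 'b option) \<Rightarrow> bool" where
  "partial_Sset \<Omega> act \<longleftrightarrow> finite \<Omega> \<and>
     (\<forall>\<alpha>\<in>\<Omega>. \<forall>s \<beta>. act \<alpha> s = Some \<beta> \<longrightarrow> \<beta> \<in> \<Omega>) \<and>
     (\<forall>\<alpha>\<in>\<Omega>. \<forall>s t. act \<alpha> (s * t) = (case act \<alpha> s of None \<Rightarrow> None | Some \<beta> \<Rightarrow> act \<beta> t))"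

definition faithful_action :: "'b set \<Rightarrow> ('b \<Rightarrow> 'a \<Rightarrow> 'b option) \<Rightarrow> 'a set \<Rightarrow> bool" where
  "faithful_action \<Omega> act T \<longleftrightarrow>
     (\<forall>s\<in>T. \<forall>t\<in>T. (\<forall>\<alpha>\<in>\<Omega>. act \<alpha> s = act \<alpha> t) \<longrightarrow> s = t)"

definition reach :: "('b \<Rightarrow> 'a \<Rightarrow> 'b option) \<Rightarrow> 'b \<Rightarrow> 'b set" where
  "reach act \<alpha> = {\<alpha>} \<union> {\<beta>. \<exists>s. act \<alpha> s = Some \<beta>}"

definition strong_orbit :: "'b set \<Rightarrow> ('b \<Rightarrow> 'a \<Rightarrow> 'b option) \<Rightarrow> 'b \<Rightarrow> 'b set" where
  "strong_orbit \<Omega> act \<alpha> = {\<beta>\<in>\<Omega>. reach act \<alpha> = reach act \<beta>}"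

definition strong_orbits :: "'b set \<Rightarrow> ('b \<Rightarrow> 'a \<Rightarrow> 'b option) \<Rightarrow> 'b set set" where
  "strong_orbits \<Omega> act = strong_orbit \<Omega> act ` \<Omega>"

definition orbit_image :: "('b \<Rightarrow> 'a \<Rightarrow> 'b option) \<Rightarrow> 'b set \<Rightarrow> 'b set" where
  "orbit_image act Orb = {\<beta>. \<exists>\<gamma>\<in>Orb. \<exists>s. act \<gamma> s = Some \<beta>}"

definition transitive_orbit :: "('b \<Rightarrow> 'a \<Rightarrow> 'b option) \<Rightarrow> 'b set \<Rightarrow> bool" where
  "transitive_orbit act Orb \<longleftrightarrow> orbit_image act Orb \<inter> Orb \<noteq> {}"

definition invariant_orbit :: "('b \<Rightarrow> 'a \<Rightarrow> 'b option) \<Rightarrow> 'b set \<Rightarrow> bool" where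
  "invariant_orbit act Orb \<longleftrightarrow> (\<forall>\<alpha>\<in>Orb. \<forall>s \<beta>. act \<alpha> s = Some \<beta> \<longrightarrow> \<beta> \<in> Orb)"

definition semisimple_Sset :: "'b set \<Rightarrow> ('b \<Rightarrow> 'a \<Rightarrow> 'b option) \<Rightarrow> bool" where
  "semisimple_Sset \<Omega> act \<longleftrightarrow>
     (\<forall>Orb\<in>strong_orbits \<Omega> act. transitive_orbit act Orb \<and> invariant_orbit act Orb)"

text \<open>J is the apex of Orb: the minimal J-class containing some s with Orb s nonempty
  (unique by the paper's remark).\<close>
definition is_apex :: "('b \<Rightarrow> 'a::semigroup_mult \<Rightarrow> 'b option) \<Rightarrow> 'b set \<Rightarrow> 'a set \<Rightarrow> bool" where
  "is_apex act Orb J \<longleftrightarrow> is_Jclass J \<and> (\<exists>s\<in>J. \<exists>\<alpha>\<in>Orb. act \<alpha> s \<noteq> None) \<and>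
     (\<forall>J'. is_Jclass J' \<and> (\<exists>s\<in>J'. \<exists>\<alpha>\<in>Orb. act \<alpha> s \<noteq> None) \<and> Jle J' J \<longrightarrow> J' = J)"

definition OmegaJ :: "'b set \<Rightarrow> ('b \<Rightarrow> 'a::semigroup_mult \<Rightarrow> 'b option) \<Rightarrow> 'a set \<Rightarrow> 'b set" where
  "OmegaJ \<Omega> act J = \<Union>{Orb \<in> strong_orbits \<Omega> act. is_apex act Orb J}"

definition OmegaJe :: "'b set \<Rightarrow> ('b \<Rightarrow> 'a::semigroup_mult \<Rightarrow> 'b option) \<Rightarrow> 'a set \<Rightarrow> 'a \<Rightarrow> 'b set" where
  "OmegaJe \<Omega> act J e = {\<beta>. \<exists>\<alpha>\<in>OmegaJ \<Omega> act J. act \<alpha> e = Some \<beta>}"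

end

theory Submission
  imports Defs
begin



definition leJ :: "'a::semigroup_mult \<Rightarrow> 'a \<Rightarrow> bool" where
  "leJ a b \<longleftrightarrow> a \<in> ideal2 {b}"

lemma leJ_iff: "leJ a b \<longleftrightarrow> a = b \<or> (\<exists>x. a = x*b) \<or> (\<exists>y. a = b*y) \<or> (\<exists>x y. a = x*b*y)"
  unfolding leJ_def ideal2_def by auto

lemma leJ_l[simp]: "leJ (x*a) a" by (auto simp: leJ_iff)
lemma leJ_r[simp]: "leJ (a*y) a" by (auto simp: leJ_iff)
lemma leJ_lr[simp]: "leJ (x*a*y) a" by (auto simp: leJ_iff)

lemma leJ_lT: "leJ b c \<Longrightarrow> leJ (x*b) c"
  unfolding leJ_iff by (elim disjE exE) (simp_all add: mult.assoc[symmetric]; blast)+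
lemma leJ_rT: "leJ b c \<Longrightarrow> leJ (b*y) c"
  unfolding leJ_iff by (elim disjE exE) (simp_all add: mult.assoc; blast)+
lemma leJ_trans: "leJ a b \<Longrightarrow> leJ b c \<Longrightarrow> leJ a c"
  by (subst (asm) leJ_iff) (auto intro: leJ_lT leJ_rT)
lemma leJ_refl[simp]: "leJ a a" by (simp add: leJ_iff)

lemma mem_ideal2: "x \<in> ideal2 A \<longleftrightarrow> (\<exists>a\<in>A. leJ x a)"
  unfolding ideal2_def leJ_iff by blast

lemma ideal2_single: "ideal2 {a} = {x. leJ x a}" by (auto simp: mem_ideal2)


lemma mem_Jclass: "b \<in> Jclass a \<longleftrightarrow> leJ a b \<and> leJ b a"
proof -
  have "b \<in> Jclass a \<longleftrightarrow> (\<forall>x. leJ x b \<longleftrightarrow> leJ x a)"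
    by (simp add: Jclass_def ideal2_single set_eq_iff)
  then show ?thesis by (meson leJ_refl leJ_trans)
qed

lemma Jclass_self[simp]: "a \<in> Jclass a" by (simp add: mem_Jclass)

lemma ideal2_Jclass: "ideal2 (Jclass a) = {x. leJ x a}"
proof -
  have "x \<in> ideal2 (Jclass a) \<longleftrightarrow> leJ x a" for x
  proof
    assume "x \<in> ideal2 (Jclass a)"
    then obtain b where "b \<in> Jclass a" "leJ x b" by (auto simp: mem_ideal2)
    then show "leJ x a" by (auto simp: mem_Jclass intro: leJ_trans)
  next
    assume "leJ x a" then show "x \<in> ideal2 (Jclass a)" using Jclass_self mem_ideal2 by blast
  qed
  then show ?thesis by blast
qed

lemma Jle_Jclass: "Jle (Jclass a) (Jclass b) \<longleftrightarrow> leJ a b"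
proof
  assume "Jle (Jclass a) (Jclass b)"
  then have "{x. leJ x a} \<subseteq> {x. leJ x b}" unfolding Jle_def ideal2_Jclass .
  moreover have "a \<in> {x. leJ x a}" by simp
  ultimately show "leJ a b" by blast
next
  assume "leJ a b"
  then show "Jle (Jclass a) (Jclass b)" unfolding Jle_def ideal2_Jclass
    by (auto intro: leJ_trans)
qed

lemma Jclass_eq_iff: "Jclass a = Jclass b \<longleftrightarrow> leJ a b \<and> leJ b a"
proof
  assume "Jclass a = Jclass b"
  then have "a \<in> Jclass b" using Jclass_self by metis
  then show "leJ a b \<and> leJ b a" by (simp add: mem_Jclass)
next
  assume "leJ a b \<and> leJ b a"
  then show "Jclass a = Jclass b" unfolding set_eq_iff mem_Jclass by (meson leJ_trans)
qed


lemma is_Jclass_mem: "is_Jclass K \<Longrightarrow> k \<in> K \<Longrightarrow> K = Jclass k"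
  unfolding is_Jclass_def by (metis Jclass_eq_iff mem_Jclass)

lemma Jclass_ideal2_inj: "is_Jclass A \<Longrightarrow> is_Jclass B \<Longrightarrow> ideal2 A = ideal2 B \<Longrightarrow> A = B"
proof -
  assume "is_Jclass A" "is_Jclass B" "ideal2 A = ideal2 B"
  then obtain a b where ab: "A = Jclass a" "B = Jclass b" "{x. leJ x a} = {x. leJ x b}"
    unfolding is_Jclass_def by (auto simp: ideal2_Jclass)
  then have "leJ a b" "leJ b a" by (metis leJ_refl mem_Collect_eq)+
  then show "A = B" using ab by (simp add: Jclass_eq_iff)
qed

lemma Jless_card:
  fixes A :: "'a::{semigroup_mult,finite} set"
  assumes "is_Jclass A" "is_Jclass B" "Jless A B"
  shows "card (ideal2 A) < card (ideal2 B)"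
proof -
  have "ideal2 A \<subseteq> ideal2 B" "ideal2 A \<noteq> ideal2 B"
    using assms Jclass_ideal2_inj unfolding Jless_def Jle_def by blast+
  then show ?thesis by (simp add: psubset_card_mono psubsetI)
qed

lemma mem_rideal: "x \<in> rideal a \<longleftrightarrow> x = a \<or> (\<exists>y. x = a*y)" by (auto simp: rideal_def)
lemma mem_lideal: "x \<in> lideal a \<longleftrightarrow> x = a \<or> (\<exists>y. x = y*a)" by (auto simp: lideal_def)
lemma rideal_trans: "a \<in> rideal b \<Longrightarrow> b \<in> rideal c \<Longrightarrow> a \<in> rideal c"
  unfolding mem_rideal by (elim disjE exE) (simp_all add: mult.assoc; blast)+
lemma lideal_trans: "a \<in> lideal b \<Longrightarrow> b \<in> lideal c \<Longrightarrow> a \<in> lideal c"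
  unfolding mem_lideal by (elim disjE exE) (simp_all add: mult.assoc[symmetric]; blast)+
lemma rideal_m[simp]: "a*y \<in> rideal a" "a \<in> rideal a" by (auto simp: mem_rideal)
lemma lideal_m[simp]: "x*a \<in> lideal a" "a \<in> lideal a" by (auto simp: mem_lideal)

lemma rideal_eq: "rideal a = rideal b \<longleftrightarrow> a \<in> rideal b \<and> b \<in> rideal a"
proof
  assume "rideal a = rideal b" then show "a \<in> rideal b \<and> b \<in> rideal a" using rideal_m(2) by blast
next
  assume "a \<in> rideal b \<and> b \<in> rideal a" then show "rideal a = rideal b" using rideal_trans by blast
qed
lemma lideal_eq: "lideal a = lideal b \<longleftrightarrow> a \<in> lideal b \<and> b \<in> lideal a"
proof
  assume "lideal a = lideal b" then show "a \<in> lideal b \<and> b \<in> lideal a" using lideal_m(2) by blast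
next
  assume "a \<in> lideal b \<and> b \<in> lideal a" then show "lideal a = lideal b" using lideal_trans by blast
qed

definition pw :: "'a::semigroup_mult \<Rightarrow> nat \<Rightarrow> 'a" where
  "pw c n = ((\<lambda>z. c*z)^^n) c"

lemma pw_0[simp]: "pw c 0 = c" and pw_Suc: "pw c (Suc n) = c * pw c n"
  by (simp_all add: pw_def)

lemma pw_add: "pw c m * pw c n = pw c (Suc (m+n))"
  by (induct m) (simp_all add: pw_Suc mult.assoc)

lemma pw_idem: "\<exists>n. pw (c::'a::{semigroup_mult,finite}) n * pw c n = pw c n"
proof -
  have "\<not> inj (pw c)"
  proof
    assume "inj (pw c)"
    then have "finite (UNIV::nat set)"
      using finite_imageD[of "pw c" UNIV] by simp
    then show False by simp
  qed
  then obtain a b where ab: "a \<noteq> b" "pw c a = pw c b" unfolding inj_def by blast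
  have "\<exists>i j. i < j \<and> pw c i = pw c j"
  proof (cases "a < b")
    case True then show ?thesis using ab by blast
  next
    case False then have "b < a" using ab by simp
    then show ?thesis using ab by (intro exI[of _ b] exI[of _ a]) simp
  qed
  then obtain i j where ij: "i < j" "pw c i = pw c j" by blast
  obtain d' where d: "j = Suc (i + d')" using less_imp_Suc_add[OF ij(1)] by blast
  define d where "d = Suc d'"
  have per: "pw c (i+k) = pw c (j+k)" for k
    by (induct k) (simp_all add: ij pw_Suc)
  have per2: "pw c (i + k + m*d) = pw c (i+k)" for m k
  proof (induct m)
    case 0 then show ?case by simp
  next
    case (Suc m)
    have e: "i + k + Suc m * d = j + (k + m*d)" using d by (simp add: d_def algebra_simps)
    have "pw c (i + k + Suc m * d) = pw c (j + (k + m*d))" by (simp only: e)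
    also have "\<dots> = pw c (i + (k + m*d))" using per[of "k + m*d"] by simp
    also have "\<dots> = pw c (i+k)" using Suc by (simp add: add.assoc)
    finally show ?case .
  qed
  define n0 where "n0 = i + d'*(i+1)"
  have e2: "Suc (n0 + n0) = i + d'*(i+1) + (i+1)*d" unfolding n0_def d_def by (simp add: algebra_simps)
  have "pw c n0 * pw c n0 = pw c (i + d'*(i+1) + (i+1)*d)" by (simp only: pw_add e2)
  also have "\<dots> = pw c n0" by (simp only: per2 n0_def)
  finally show ?thesis by blast
qed

lemma pw_cases: "pw c n = c \<or> (\<exists>z. pw c n = c*z)" by (cases n) (auto simp: pw_Suc)
lemma pw_cases_r: "pw c n = c \<or> (\<exists>z. pw c n = z*c)"
proof (cases n)
  case (Suc m)
  have "pw c m * pw c 0 = pw c (Suc m)" using pw_add[of c m 0] by simp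
  then have "pw c n = pw c m * c" using Suc by simp
  then show ?thesis by blast
qed simp
lemma leJ_pw[simp]: "leJ (pw c n) c" using pw_cases[of c n] by auto

lemma pw_sandwich: "a = x*a*c \<Longrightarrow> \<exists>x'. a = x'*a*pw c n"
proof (induct n)
  case 0 show ?case unfolding pw_0 using 0 by blast
next
  case (Suc n)
  then obtain x' where x': "a = x'*a*pw c n" by blast
  have "x'*a*pw c n = x'*(x*a*c)*pw c n"
    using Suc.prems by (rule arg_cong[where f="\<lambda>z. x'*z*pw c n"])
  also have "\<dots> = (x'*x)*a*(c*pw c n)" by (simp add: mult.assoc)
  finally have eq: "x'*a*pw c n = (x'*x)*a*(c*pw c n)" .
  from x' eq have "a = (x'*x)*a*(c*pw c n)" by (rule trans)
  then have "a = (x'*x)*a*pw c (Suc n)" by (simp only: pw_Suc)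
  then show ?case by blast
qed

lemma pw_sandwich_r: "a = c*a*x \<Longrightarrow> \<exists>x'. a = pw c n*a*x'"
proof (induct n)
  case 0 show ?case unfolding pw_0 using 0 by blast
next
  case (Suc n)
  then obtain x' where x': "a = pw c n*a*x'" by blast
  have "pw c n*a*x' = pw c n*(c*a*x)*x'"
    using Suc.prems by (rule arg_cong[where f="\<lambda>z. pw c n*z*x'"])
  also have "\<dots> = (pw c n*c)*a*(x*x')" by (simp add: mult.assoc)
  also have "pw c n * c = pw c (Suc n)" using pw_add[of c n 0] by simp
  finally have eq: "pw c n*a*x' = pw c (Suc n)*a*(x*x')" .
  from x' eq have "a = pw c (Suc n)*a*(x*x')" by (rule trans)
  then show ?case by blast
qed

lemma stab_core: "a = x*a*(c::'a::{semigroup_mult,finite}) \<Longrightarrow> a = a*c \<or> (\<exists>z. a = a*c*z)"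
proof -
  assume h: "a = x*a*c"
  obtain n where n: "pw c n * pw c n = pw c n" using pw_idem by blast
  obtain x' where x': "a = x'*a*pw c n" using pw_sandwich[OF h] by blast
  have "a * pw c n = (x'*a*pw c n) * pw c n"
    using x' by (rule arg_cong[where f="\<lambda>z. z * pw c n"])
  also have "\<dots> = x'*a*(pw c n * pw c n)" by (simp add: mult.assoc)
  also have "\<dots> = a" using n x'[symmetric] by (simp only:)
  finally have a: "a = a * pw c n" by (rule sym)
  from pw_cases[of c n] show ?thesis
  proof
    assume eq: "pw c n = c" from a have "a = a*c" unfolding eq . then show ?thesis by blast
  next
    assume "\<exists>z. pw c n = c*z"
    then obtain z where eq: "pw c n = c*z" by blast
    from a have "a = a*(c*z)" unfolding eq .
    then have "a = a*c*z" by (metis mult.assoc)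
    then show ?thesis by blast
  qed
qed

lemma stab_core_r: "a = (c::'a::{semigroup_mult,finite})*a*x \<Longrightarrow> a = c*a \<or> (\<exists>z. a = z*c*a)"
proof -
  assume h: "a = c*a*x"
  obtain n where n: "pw c n * pw c n = pw c n" using pw_idem by blast
  obtain x' where x': "a = pw c n*a*x'" using pw_sandwich_r[OF h] by blast
  have "pw c n * a = pw c n * (pw c n*a*x')"
    using x' by (rule arg_cong[where f="\<lambda>z. pw c n * z"])
  also have "\<dots> = (pw c n * pw c n)*a*x'" by (simp add: mult.assoc)
  also have "\<dots> = a" using n x'[symmetric] by (simp only:)
  finally have a: "a = pw c n * a" by (rule sym)
  from pw_cases_r[of c n] show ?thesis
  proof
    assume eq: "pw c n = c" from a have "a = c*a" unfolding eq . then show ?thesis by blast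
  next
    assume "\<exists>z. pw c n = z*c"
    then obtain z where eq: "pw c n = z*c" by blast
    from a have "a = z*c*a" unfolding eq .
    then show ?thesis by blast
  qed
qed

lemma stab_R: "leJ a ((a::'a::{semigroup_mult,finite})*b) \<Longrightarrow> a \<in> rideal (a*b)"
  unfolding leJ_iff mem_rideal
proof (elim disjE exE)
  fix x assume "a = x*(a*b)"
  then have "a = x*a*b" by (metis mult.assoc)
  then show "a = a * b \<or> (\<exists>y. a = a * b * y)" using stab_core by blast
next
  fix x y assume "a = x*(a*b)*y"
  then have "a = x*a*(b*y)" by (metis mult.assoc)
  then have "a = a*(b*y) \<or> (\<exists>z. a = a*(b*y)*z)" using stab_core by blast
  then show "a = a * b \<or> (\<exists>y. a = a * b * y)" by (metis mult.assoc)
qed blast+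

lemma stab_L: "leJ a ((b::'a::{semigroup_mult,finite})*a) \<Longrightarrow> a \<in> lideal (b*a)"
  unfolding leJ_iff mem_lideal
proof (elim disjE exE)
  fix y assume "a = b*a*y"
  then have "a = b*a \<or> (\<exists>z. a = z*b*a)" using stab_core_r by blast
  then show "a = b * a \<or> (\<exists>z. a = z * (b * a))" by (metis mult.assoc)
next
  fix x y assume "a = x*(b*a)*y"
  then have "a = (x*b)*a*y" by (metis mult.assoc)
  then have "a = (x*b)*a \<or> (\<exists>z. a = z*(x*b)*a)" using stab_core_r by blast
  then show "a = b * a \<or> (\<exists>z. a = z * (b * a))" by (metis mult.assoc)
qed blast+




locale pss =
  fixes \<Omega> :: "'b set" and act :: "'b \<Rightarrow> 'a::{semigroup_mult,finite} \<Rightarrow> 'b option"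
  assumes Sset: "partial_Sset \<Omega> act" and ss: "semisimple_Sset \<Omega> act"
begin

lemma Sset2: "\<forall>\<alpha>\<in>\<Omega>. \<forall>s \<beta>. act \<alpha> s = Some \<beta> \<longrightarrow> \<beta>\<in>\<Omega>"
  using Sset[unfolded partial_Sset_def] by (rule conjunct1[OF conjunct2])

lemma Sset3: "\<forall>\<alpha>\<in>\<Omega>. \<forall>s t. act \<alpha> (s * t) = (case act \<alpha> s of None \<Rightarrow> None | Some \<beta> \<Rightarrow> act \<beta> t)"
  using Sset[unfolded partial_Sset_def] by (rule conjunct2[OF conjunct2])

lemma act_closed: "\<alpha>\<in>\<Omega> \<Longrightarrow> act \<alpha> s = Some \<beta> \<Longrightarrow> \<beta>\<in>\<Omega>"
  using Sset2 by blast

lemma act_mult: "\<alpha>\<in>\<Omega> \<Longrightarrow> act \<alpha> (s*t) = (case act \<alpha> s of None \<Rightarrow> None | Some \<beta> \<Rightarrow> act \<beta> t)"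
  using Sset3 by blast

lemma act_mult_Some: "\<alpha>\<in>\<Omega> \<Longrightarrow> act \<alpha> s = Some \<beta> \<Longrightarrow> act \<alpha> (s*t) = act \<beta> t"
  using act_mult[of \<alpha> s t] by simp

lemma act_mult_None: "\<alpha>\<in>\<Omega> \<Longrightarrow> act \<alpha> s = None \<Longrightarrow> act \<alpha> (s*t) = None"
  using act_mult[of \<alpha> s t] by simp

lemma act_mult_right:
  assumes a: "\<alpha>\<in>\<Omega>" "act \<alpha> (u*y) \<noteq> None" shows "act \<alpha> u \<noteq> None"
proof
  assume "act \<alpha> u = None"
  then have "act \<alpha> (u*y) = None" by (rule act_mult_None[OF a(1)])
  with a(2) show False by (rule notE)
qed

lemma self_orb: "\<alpha>\<in>\<Omega> \<Longrightarrow> \<alpha> \<in> strong_orbit \<Omega> act \<alpha>"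
  by (simp add: strong_orbit_def)

lemma orb_in: "\<alpha>\<in>\<Omega> \<Longrightarrow> strong_orbit \<Omega> act \<alpha> \<in> strong_orbits \<Omega> act"
  by (simp add: strong_orbits_def)

lemma orb_sub: "Ob \<in> strong_orbits \<Omega> act \<Longrightarrow> Ob \<subseteq> \<Omega>"
  by (auto simp: strong_orbits_def strong_orbit_def)

lemma orb_inv: "Ob \<in> strong_orbits \<Omega> act \<Longrightarrow> \<beta>\<in>Ob \<Longrightarrow> act \<beta> s = Some \<gamma> \<Longrightarrow> \<gamma>\<in>Ob"
  using ss unfolding semisimple_Sset_def invariant_orbit_def by blast

lemma orb_trans: "Ob \<in> strong_orbits \<Omega> act \<Longrightarrow> \<exists>\<beta>\<in>Ob. \<exists>s \<gamma>. act \<beta> s = Some \<gamma>"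
proof -
  assume Ob: "Ob \<in> strong_orbits \<Omega> act"
  have "transitive_orbit act Ob" using ss Ob unfolding semisimple_Sset_def by blast
  then obtain \<beta> where "\<beta> \<in> orbit_image act Ob" unfolding transitive_orbit_def by blast
  then show ?thesis unfolding orbit_image_def by blast
qed

lemma orb_reach: "Ob \<in> strong_orbits \<Omega> act \<Longrightarrow> \<beta>\<in>Ob \<Longrightarrow> \<gamma>\<in>Ob \<Longrightarrow> \<gamma> = \<beta> \<or> (\<exists>s. act \<beta> s = Some \<gamma>)"
proof -
  assume "Ob \<in> strong_orbits \<Omega> act" "\<beta>\<in>Ob" "\<gamma>\<in>Ob"
  then obtain \<alpha> where "reach act \<alpha> = reach act \<beta>" "reach act \<alpha> = reach act \<gamma>"
    by (auto simp: strong_orbits_def strong_orbit_def)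
  then have "\<gamma> \<in> reach act \<beta>" by (simp add: reach_def)
  then show ?thesis by (auto simp: reach_def)
qed

lemma act_pw: "\<beta>\<in>\<Omega> \<Longrightarrow> act \<beta> c = Some \<beta> \<Longrightarrow> act \<beta> (pw c n) = Some \<beta>"
  by (induct n) (simp_all add: pw_Suc act_mult_Some)

lemma K_lemma:
  assumes Ob: "Ob \<in> strong_orbits \<Omega> act" and b: "\<beta>\<in>Ob" and s: "act \<beta> s = Some \<gamma>"
  shows "\<exists>f. f*f = f \<and> leJ f s \<and> act \<beta> f = Some \<beta>"
proof -
  have bO: "\<beta>\<in>\<Omega>" using Ob b orb_sub by blast
  have gO: "\<gamma>\<in>Ob" using orb_inv[OF Ob b s] .
  have "\<exists>w. leJ w s \<and> act \<beta> w = Some \<beta>"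
  proof (cases "\<beta> = \<gamma>")
    case True then show ?thesis using s by (intro exI[of _ s]) simp
  next
    case False
    then obtain u where u: "act \<gamma> u = Some \<beta>" using orb_reach[OF Ob gO b] by blast
    have "act \<beta> (s*u) = Some \<beta>" using act_mult_Some[OF bO s] u by simp
    then show ?thesis by (intro exI[of _ "s*u"]) simp
  qed
  then obtain w where w: "leJ w s" "act \<beta> w = Some \<beta>" by blast
  obtain n where n: "pw w n * pw w n = pw w n" using pw_idem by blast
  show ?thesis
    using n act_pw[OF bO w(2)] leJ_trans[OF leJ_pw w(1)] by blast
qed

definition acts :: "'b set \<Rightarrow> 'a \<Rightarrow> bool" where
  "acts Ob s \<longleftrightarrow> (\<exists>\<alpha>\<in>Ob. act \<alpha> s \<noteq> None)"

lemma apex_le: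
  assumes Ob: "Ob \<in> strong_orbits \<Omega> act" and ap: "is_apex act Ob K"
    and k: "k\<in>K" and b: "\<beta>\<in>Ob" and s: "act \<beta> s \<noteq> None"
  shows "leJ k s"
proof -
  from ap obtain s0 \<delta> where s0: "s0\<in>K" "\<delta>\<in>Ob" "act \<delta> s0 \<noteq> None" and Kc: "is_Jclass K"
    and min: "\<And>J'. is_Jclass J' \<Longrightarrow> (\<exists>s\<in>J'. \<exists>\<alpha>\<in>Ob. act \<alpha> s \<noteq> None) \<Longrightarrow> Jle J' K \<Longrightarrow> J' = K"
    unfolding is_apex_def by blast
  have dO: "\<delta>\<in>\<Omega>" using Ob s0(2) orb_sub by blast
  obtain \<delta>' where d': "act \<delta> s0 = Some \<delta>'" using s0(3) by blast
  have d'Ob: "\<delta>'\<in>Ob" using orb_inv[OF Ob s0(2) d'] .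
  obtain \<gamma> where g: "act \<beta> s = Some \<gamma>" using s by blast
  obtain f where f: "f*f = f" "leJ f s" "act \<beta> f = Some \<beta>" using K_lemma[OF Ob b g] by blast
  have "\<exists>z. leJ z s0 \<and> act \<delta> z = Some \<beta>"
  proof (cases "\<beta> = \<delta>'")
    case True then show ?thesis using d' by (intro exI[of _ s0]) simp
  next
    case False
    then obtain v where v: "act \<delta>' v = Some \<beta>" using orb_reach[OF Ob d'Ob b] by blast
    have "act \<delta> (s0*v) = Some \<beta>" using act_mult_Some[OF dO d'] v by simp
    then show ?thesis by (intro exI[of _ "s0*v"]) simp
  qed
  then obtain z where z: "leJ z s0" "act \<delta> z = Some \<beta>" by blast
  have zf: "act \<delta> (z*f) = Some \<beta>" using act_mult_Some[OF dO z(2)] f(3) by simp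
  have KJ: "K = Jclass s0" using is_Jclass_mem[OF Kc s0(1)] .
  have "Jclass (z*f) = K"
  proof (rule min)
    show "is_Jclass (Jclass (z*f))" by (auto simp: is_Jclass_def)
    show "\<exists>s\<in>Jclass (z * f). \<exists>\<alpha>\<in>Ob. act \<alpha> s \<noteq> None" using zf s0(2) Jclass_self by fastforce
    show "Jle (Jclass (z * f)) K" unfolding KJ Jle_Jclass using z(1) leJ_rT by blast
  qed
  then have "k \<in> Jclass (z*f)" using k by simp
  then have "leJ k (z*f)" by (simp add: mem_Jclass)
  then show ?thesis using leJ_trans[OF _ leJ_trans[OF leJ_l f(2)]] by blast
qed

lemma apex_idem:
  assumes Ob: "Ob \<in> strong_orbits \<Omega> act" and ap: "is_apex act Ob K"
  shows "\<exists>f\<in>K. f*f = f \<and> (\<exists>\<delta>\<in>Ob. act \<delta> f = Some \<delta>)"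
proof -
  from ap obtain s0 \<delta> where s0: "s0\<in>K" "\<delta>\<in>Ob" "act \<delta> s0 \<noteq> None" and Kc: "is_Jclass K"
    and min: "\<And>J'. is_Jclass J' \<Longrightarrow> (\<exists>s\<in>J'. \<exists>\<alpha>\<in>Ob. act \<alpha> s \<noteq> None) \<Longrightarrow> Jle J' K \<Longrightarrow> J' = K"
    unfolding is_apex_def by blast
  obtain \<delta>' where d': "act \<delta> s0 = Some \<delta>'" using s0(3) by blast
  obtain f where f: "f*f = f" "leJ f s0" "act \<delta> f = Some \<delta>" using K_lemma[OF Ob s0(2) d'] by blast
  have KJ: "K = Jclass s0" using is_Jclass_mem[OF Kc s0(1)] .
  have "Jclass f = K"
  proof (rule min)
    show "is_Jclass (Jclass f)" by (auto simp: is_Jclass_def)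
    show "\<exists>s\<in>Jclass f. \<exists>\<alpha>\<in>Ob. act \<alpha> s \<noteq> None" using f(3) s0(2) Jclass_self by fastforce
    show "Jle (Jclass f) K" unfolding KJ Jle_Jclass using f(2) .
  qed
  then have "f \<in> K" using Jclass_self by blast
  then show ?thesis using f s0(2) by blast
qed

lemma apex_regular: "Ob \<in> strong_orbits \<Omega> act \<Longrightarrow> is_apex act Ob K \<Longrightarrow> regularJ K"
  using apex_idem unfolding regularJ_def is_apex_def by blast

lemma apex_Jclass: "is_apex act Ob K \<Longrightarrow> is_Jclass K"
  unfolding is_apex_def by blast

lemma apex_none:
  assumes Ob: "Ob \<in> strong_orbits \<Omega> act" and ap: "is_apex act Ob K"
    and k: "k\<in>K" and sk: "leJ s k" and sK: "s \<notin> K" and b: "\<beta>\<in>Ob"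
  shows "act \<beta> s = None"
proof (rule ccontr)
  assume "act \<beta> s \<noteq> None"
  then have "leJ k s" using apex_le[OF Ob ap k b] by blast
  then have "s \<in> Jclass k" using sk by (simp add: mem_Jclass)
  then show False using sK is_Jclass_mem[OF apex_Jclass[OF ap] k] by simp
qed

lemma apex_A:
  assumes Ob: "Ob \<in> strong_orbits \<Omega> act" and ap: "is_apex act Ob K" and b: "\<beta>\<in>Ob"
  shows "\<exists>\<gamma>\<in>Ob. \<exists>x\<in>K. act \<gamma> x = Some \<beta>"
proof -
  from ap obtain s0 \<delta> where s0: "s0\<in>K" "\<delta>\<in>Ob" "act \<delta> s0 \<noteq> None" and Kc: "is_Jclass K"
    unfolding is_apex_def by blast
  have dO: "\<delta>\<in>\<Omega>" using Ob s0(2) orb_sub by blast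
  obtain \<delta>' where d': "act \<delta> s0 = Some \<delta>'" using s0(3) by blast
  have d'Ob: "\<delta>'\<in>Ob" using orb_inv[OF Ob s0(2) d'] .
  show ?thesis
  proof (cases "\<beta> = \<delta>'")
    case True then show ?thesis using d' s0 by blast
  next
    case False
    then obtain v where v: "act \<delta>' v = Some \<beta>" using orb_reach[OF Ob d'Ob b] by blast
    have x: "act \<delta> (s0*v) = Some \<beta>" using act_mult_Some[OF dO d'] v by simp
    have "leJ s0 (s0*v)" using apex_le[OF Ob ap s0(1) s0(2)] x by simp
    then have "s0*v \<in> K" using is_Jclass_mem[OF Kc s0(1)] by (simp add: mem_Jclass)
    then show ?thesis using x s0(2) by blast
  qed
qed

lemma apex_B:
  assumes Ob: "Ob \<in> strong_orbits \<Omega> act" and ap: "is_apex act Ob K"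
    and eq: "equivRM K s t" and b: "\<beta>\<in>Ob"
  shows "act \<beta> s = act \<beta> t"
proof -
  obtain \<gamma> x where g: "\<gamma>\<in>Ob" "x\<in>K" "act \<gamma> x = Some \<beta>" using apex_A[OF Ob ap b] by blast
  have gO: "\<gamma>\<in>\<Omega>" using Ob g(1) orb_sub by blast
  have es: "act \<beta> s = act \<gamma> (x*s)" and et: "act \<beta> t = act \<gamma> (x*t)"
    using act_mult_Some[OF gO g(3)] by simp_all
  show ?thesis
  proof (cases "x*s \<in> K")
    case True
    then have "x*s = x*t" using eq g(2) unfolding equivRM_def by blast
    then show ?thesis using es et by simp
  next
    case False
    then have "x*t \<notin> K" using eq g(2) unfolding equivRM_def by blast
    then have "act \<gamma> (x*s) = None" "act \<gamma> (x*t) = None"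
      using apex_none[OF Ob ap g(2) _ _ g(1)] False by simp_all
    then show ?thesis using es et by simp
  qed
qed

lemma apex_act:
  assumes Ob: "Ob \<in> strong_orbits \<Omega> act" and ap: "is_apex act Ob K" and u: "u\<in>K"
  shows "\<exists>\<beta>\<in>Ob. act \<beta> u \<noteq> None"
proof -
  obtain f \<delta> where f: "f\<in>K" "f*f = f" "\<delta>\<in>Ob" "act \<delta> f = Some \<delta>" using apex_idem[OF Ob ap] by blast
  have dO: "\<delta>\<in>\<Omega>" using Ob f(3) orb_sub by blast
  have "K = Jclass f" using is_Jclass_mem[OF apex_Jclass[OF ap] f(1)] .
  then have "leJ f u" using u by (simp add: mem_Jclass)
  then have "\<exists>x. act \<delta> (x*u) \<noteq> None \<or> act \<delta> u \<noteq> None"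
    unfolding leJ_iff
  proof (elim disjE exE)
    assume "f = u" then show ?thesis using f(4) by auto
  next
    fix x assume "f = x*u" then have "act \<delta> (x*u) \<noteq> None" using f(4) by simp
    then show ?thesis by blast
  next
    fix y assume "f = u*y" then have "act \<delta> (u*y) \<noteq> None" using f(4) by simp
    then have "act \<delta> u \<noteq> None" using act_mult_right[OF dO] by blast
    then show ?thesis by blast
  next
    fix x y assume "f = x*u*y" then have "act \<delta> ((x*u)*y) \<noteq> None" using f(4) by simp
    then have "act \<delta> (x*u) \<noteq> None" using act_mult_right[OF dO] by blast
    then show ?thesis by blast
  qed
  then obtain x where "act \<delta> (x*u) \<noteq> None \<or> act \<delta> u \<noteq> None" by blast
  then show ?thesis
  proof
    assume h: "act \<delta> (x*u) \<noteq> None"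
    then obtain \<delta>1 where d1: "act \<delta> x = Some \<delta>1" using act_mult_None[OF dO] by fastforce
    then have "act \<delta>1 u \<noteq> None" using h act_mult_Some[OF dO d1] by simp
    then show ?thesis using orb_inv[OF Ob f(3) d1] by blast
  next
    assume "act \<delta> u \<noteq> None" then show ?thesis using f(3) by blast
  qed
qed

lemma apex_exists:
  assumes Ob: "Ob \<in> strong_orbits \<Omega> act"
  shows "\<exists>K. is_apex act Ob K"
proof -
  define C where "C = {J. is_Jclass J \<and> (\<exists>s\<in>J. \<exists>\<alpha>\<in>Ob. act \<alpha> s \<noteq> None)}"
  obtain \<beta> s \<gamma> where "\<beta>\<in>Ob" "act \<beta> s = Some \<gamma>" using orb_trans[OF Ob] by blast
  then have "Jclass s \<in> C" unfolding C_def is_Jclass_def using Jclass_self by fastforce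
  then obtain K where K: "K \<in> C" and Kmin: "\<forall>J'. J' \<in> C \<longrightarrow> card (ideal2 K) \<le> card (ideal2 J')"
    using ex_has_least_nat[of "\<lambda>J. J \<in> C" "Jclass s" "\<lambda>J. card (ideal2 J)"] by blast
  have "is_apex act Ob K"
    unfolding is_apex_def
  proof (intro conjI allI impI)
    show "is_Jclass K" using K by (simp add: C_def)
    show "\<exists>s\<in>K. \<exists>\<alpha>\<in>Ob. act \<alpha> s \<noteq> None" using K by (simp add: C_def)
  next
    fix J' assume h: "is_Jclass J' \<and> (\<exists>s\<in>J'. \<exists>\<alpha>\<in>Ob. act \<alpha> s \<noteq> None) \<and> Jle J' K"
    then have "J' \<in> C" by (simp add: C_def)
    then have c: "card (ideal2 K) \<le> card (ideal2 J')" using Kmin by blast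
    have sub: "ideal2 J' \<subseteq> ideal2 K" using h by (simp add: Jle_def)
    have "ideal2 J' = ideal2 K" using card_subset_eq[OF finite sub] c card_mono[OF finite sub] by simp
    moreover have "is_Jclass K" using K by (simp add: C_def)
    ultimately show "J' = K" using Jclass_ideal2_inj h by blast
  qed
  then show ?thesis by blast
qed

end



lemma stab_R': "h = a*b \<Longrightarrow> leJ a (h::'a::{semigroup_mult,finite}) \<Longrightarrow> a \<in> rideal h"
  using stab_R[of a b] by simp
lemma stab_L': "h = b*a \<Longrightarrow> leJ a (h::'a::{semigroup_mult,finite}) \<Longrightarrow> a \<in> lideal h"
  using stab_L[of a b] by simp

lemma in_Jclass_mid: "is_Jclass K \<Longrightarrow> a \<in> K \<Longrightarrow> b \<in> K \<Longrightarrow> leJ a c \<Longrightarrow> leJ c b \<Longrightarrow> c \<in> K"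
proof -
  assume K: "is_Jclass K" and a: "a \<in> K" and b: "b \<in> K" and ac: "leJ a c" and cb: "leJ c b"
  have KJ: "K = Jclass a" using is_Jclass_mem[OF K a] .
  have "leJ b a" using b unfolding KJ by (simp add: mem_Jclass)
  then have "leJ c a" using cb leJ_trans by blast
  then show "c \<in> K" unfolding KJ using ac by (simp add: mem_Jclass)
qed

lemma sandwich_idem:
  assumes idem: "e*e = e" and le: "leJ e w"
  shows "\<exists>p q. e = p*w*q \<and> p = e*p \<and> q = q*e"
proof -
  have pe: "e*(e*x) = e*x" for x by (simp add: mult.assoc[symmetric] idem)
  have qe: "(y*e)*e = y*e" for y by (simp add: mult.assoc idem)
  from le show ?thesis unfolding leJ_iff
  proof (elim disjE exE)
    assume h: "e = w"
    have "e*w*e = e" using h[symmetric] idem by simp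
    then show ?thesis using idem by (intro exI[of _ e]) simp
  next
    fix x assume h: "e = x*w"
    have "(e*x)*w*e = e*(x*w)*e" by (simp add: mult.assoc)
    also have "\<dots> = e" using h[symmetric] idem by simp
    finally show ?thesis using pe idem by (intro exI[of _ "e*x"] exI[of _ e]) simp
  next
    fix y assume h: "e = w*y"
    have "e*w*(y*e) = e*(w*y)*e" by (simp add: mult.assoc)
    also have "\<dots> = e" using h[symmetric] idem by simp
    finally show ?thesis using qe idem by (intro exI[of _ e] exI[of _ "y*e"]) simp
  next
    fix x y assume h: "e = x*w*y"
    have "(e*x)*w*(y*e) = e*(x*w*y)*e" by (simp add: mult.assoc)
    also have "\<dots> = e" using h[symmetric] idem by simp
    finally show ?thesis using pe qe by (intro exI[of _ "e*x"] exI[of _ "y*e"]) simp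
  qed
qed

lemma equivJ_from_RM: "(\<And>y. equivRM J (s*y) (t*y)) \<Longrightarrow> equivJ J s t"
  unfolding equivJ_def equivRM_def mult.assoc by blast

lemma equivRM_left:
  assumes K: "is_Jclass K" and eq: "equivRM K s t"
  shows "equivRM K (x*s) (x*t)"
  unfolding equivRM_def
proof (intro ballI)
  fix z assume z: "z \<in> K"
  show "(z * (x * s) \<in> K) = (z * (x * t) \<in> K) \<and> (z * (x * s) \<in> K \<longrightarrow> z * (x * s) = z * (x * t))"
  proof (cases "z*x \<in> K")
    case True
    then show ?thesis using eq unfolding equivRM_def mult.assoc[symmetric] by blast
  next
    case False
    have "z*(x*s) \<notin> K"
    proof
      assume "z*(x*s) \<in> K"
      then have "z*x \<in> K" using in_Jclass_mid[OF K _ z, of "z*(x*s)" "z*x"]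
        by (simp add: mult.assoc[symmetric])
      then show False using False by simp
    qed
    moreover have "z*(x*t) \<notin> K"
    proof
      assume "z*(x*t) \<in> K"
      then have "z*x \<in> K" using in_Jclass_mid[OF K _ z, of "z*(x*t)" "z*x"]
        by (simp add: mult.assoc[symmetric])
      then show False using False by simp
    qed
    ultimately show ?thesis by blast
  qed
qed

context pss
begin

definition rel :: "'a \<Rightarrow> 'a \<Rightarrow> bool" where
  "rel s t \<longleftrightarrow> (\<forall>\<alpha>\<in>\<Omega>. act \<alpha> s = act \<alpha> t)"

lemma rel_sym: "rel s t \<Longrightarrow> rel t s" by (simp add: rel_def)

lemma rel_left: "rel s t \<Longrightarrow> rel (x*s) (x*t)"
  unfolding rel_def
proof (intro ballI)
  fix \<alpha> assume r: "\<forall>\<alpha>\<in>\<Omega>. act \<alpha> s = act \<alpha> t" and a: "\<alpha>\<in>\<Omega>"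
  show "act \<alpha> (x*s) = act \<alpha> (x*t)"
  proof (cases "act \<alpha> x")
    case None then show ?thesis using act_mult_None[OF a] by simp
  next
    case (Some \<beta>)
    then have "\<beta>\<in>\<Omega>" using act_closed[OF a] by blast
    then show ?thesis using act_mult_Some[OF a Some] r by simp
  qed
qed

lemma rel_right: "rel s t \<Longrightarrow> rel (s*y) (t*y)"
  unfolding rel_def
proof (intro ballI)
  fix \<alpha> assume r: "\<forall>\<alpha>\<in>\<Omega>. act \<alpha> s = act \<alpha> t" and a: "\<alpha>\<in>\<Omega>"
  show "act \<alpha> (s*y) = act \<alpha> (t*y)"
    using act_mult[OF a, of s y] act_mult[OF a, of t y] r a by simp
qed

lemma forward1:
  assumes faith: "\<forall>s t. rel s t \<longrightarrow> s = t" and irr: "RM_irreducible J"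
  shows "OmegaJ \<Omega> act J \<noteq> {}"
proof -
  from irr have regJ: "regularJ J"
    and ex: "\<exists>s t. (\<forall>J'. regularJ J' \<and> Jless J' J \<longrightarrow> equivRM J' s t) \<and> \<not> equivRM J s t"
    unfolding RM_irreducible_def by blast+
  then obtain s t where st: "\<forall>J'. regularJ J' \<and> Jless J' J \<longrightarrow> equivRM J' s t" "\<not> equivRM J s t"
    by blast
  obtain x where x: "x\<in>J" "\<not>((x*s\<in>J \<longleftrightarrow> x*t\<in>J) \<and> (x*s\<in>J \<longrightarrow> x*s = x*t))"
    using st(2) unfolding equivRM_def by blast
  have "x*s \<noteq> x*t"
  proof
    assume "x*s = x*t" with x(2) show False by simp
  qed
  then have "\<not> rel (x*s) (x*t)" using faith by blast
  then obtain \<alpha> where a: "\<alpha>\<in>\<Omega>" "act \<alpha> (x*s) \<noteq> act \<alpha> (x*t)" unfolding rel_def by blast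
  define Ob where "Ob = strong_orbit \<Omega> act \<alpha>"
  have Ob: "Ob \<in> strong_orbits \<Omega> act" unfolding Ob_def using orb_in[OF a(1)] .
  have aO: "\<alpha> \<in> Ob" unfolding Ob_def using self_orb[OF a(1)] .
  obtain K where K: "is_apex act Ob K" using apex_exists[OF Ob] by blast
  have nK: "\<not> equivRM K (x*s) (x*t)" using apex_B[OF Ob K _ aO] a(2) by blast
  then obtain z where z: "z\<in>K" "z*(x*s) \<in> K \<or> z*(x*t) \<in> K" unfolding equivRM_def by blast
  have Kc: "is_Jclass K" using apex_Jclass[OF K] .
  have Jc: "is_Jclass J" using regJ unfolding regularJ_def by blast
  have KK: "K = Jclass z" using is_Jclass_mem[OF Kc z(1)] .
  have JJ: "J = Jclass x" using is_Jclass_mem[OF Jc x(1)] .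
  have "leJ z x"
    using z(2)
  proof
    assume "z*(x*s) \<in> K"
    then have "leJ z (z*(x*s))" unfolding KK by (simp add: mem_Jclass)
    then show ?thesis using leJ_trans[OF _ leJ_trans[OF leJ_l leJ_r]] by blast
  next
    assume "z*(x*t) \<in> K"
    then have "leJ z (z*(x*t))" unfolding KK by (simp add: mem_Jclass)
    then show ?thesis using leJ_trans[OF _ leJ_trans[OF leJ_l leJ_r]] by blast
  qed
  then have le: "Jle K J" unfolding KK JJ Jle_Jclass .
  have "K = J"
  proof (rule ccontr)
    assume "K \<noteq> J"
    then have "Jless K J" using le unfolding Jless_def by blast
    then have "equivRM K s t" using st(1) apex_regular[OF Ob K] by blast
    then have "equivRM K (x*s) (x*t)" using equivRM_left Kc by blast
    then show False using nK by blast
  qed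
  then have "\<alpha> \<in> OmegaJ \<Omega> act J" unfolding OmegaJ_def using Ob K aO by blast
  then show ?thesis by blast
qed

lemma rideal_leJ: "x \<in> rideal a \<Longrightarrow> leJ x a"
  by (auto simp: mem_rideal)

lemma Hgroup_left:
  assumes idem: "ee*ee = ee" and g: "g \<in> Hgroup ee"
  shows "ee*g = g" "leJ g ee"
proof -
  have gr: "g \<in> rideal ee" using g unfolding Hgroup_def using rideal_eq by blast
  then show "leJ g ee" by (rule rideal_leJ)
  from gr have "g = ee \<or> (\<exists>y. g = ee*y)" by (simp add: mem_rideal)
  then show "ee*g = g"
  proof (elim disjE exE)
    assume "g = ee" then show "ee*g = g" using idem by simp
  next
    fix y assume h: "g = ee*y"
    have "ee*(ee*y) = ee*y" by (simp add: mult.assoc[symmetric] idem)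
    then show "ee*g = g" using h by simp
  qed
qed

lemma forward2:
  assumes faith: "\<forall>s t. rel s t \<longrightarrow> s = t" and irr: "RM_irreducible J"
    and idem: "e J \<in> J \<and> e J * e J = e J"
  shows "faithful_action (OmegaJe \<Omega> act J (e J)) act (MJ e J)"
  unfolding faithful_action_def
proof (intro ballI impI)
  fix g h assume g: "g \<in> MJ e J" and h: "h \<in> MJ e J"
    and eqa: "\<forall>\<alpha>\<in>OmegaJe \<Omega> act J (e J). act \<alpha> g = act \<alpha> h"
  define ee where "ee = e J"
  have ee: "ee \<in> J" "ee*ee = ee" using idem unfolding ee_def by simp_all
  have regJ: "regularJ J" using irr unfolding RM_irreducible_def by blast
  have Jc: "is_Jclass J" using regJ unfolding regularJ_def by blast
  have JJ: "J = Jclass ee" using is_Jclass_mem[OF Jc ee(1)] .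
  have gH: "g \<in> Hgroup ee" and gM: "\<forall>J'. regularJ J' \<and> Jless J' J \<longrightarrow> equivRM J' g ee"
    using g unfolding MJ_def ee_def by blast+
  have hH: "h \<in> Hgroup ee" and hM: "\<forall>J'. regularJ J' \<and> Jless J' J \<longrightarrow> equivRM J' h ee"
    using h unfolding MJ_def ee_def by blast+
  have eg: "ee*g = g" and lg: "leJ g ee" using Hgroup_left[OF ee(2) gH] by blast+
  have eh: "ee*h = h" and lh: "leJ h ee" using Hgroup_left[OF ee(2) hH] by blast+
  have "rel g h" unfolding rel_def
  proof
    fix \<alpha> assume a: "\<alpha>\<in>\<Omega>"
    define Ob where "Ob = strong_orbit \<Omega> act \<alpha>"
    have Ob: "Ob \<in> strong_orbits \<Omega> act" unfolding Ob_def using orb_in[OF a] .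
    have aO: "\<alpha> \<in> Ob" unfolding Ob_def using self_orb[OF a] .
    obtain K where K: "is_apex act Ob K" using apex_exists[OF Ob] by blast
    show "act \<alpha> g = act \<alpha> h"
    proof (cases "K = J")
      case True
      then have aJ: "\<alpha> \<in> OmegaJ \<Omega> act J" unfolding OmegaJ_def using Ob K aO by blast
      show ?thesis
      proof (cases "act \<alpha> ee")
        case None
        then have "act \<alpha> (ee*g) = None" "act \<alpha> (ee*h) = None" using act_mult_None[OF a] by simp_all
        then show ?thesis using eg eh by simp
      next
        case (Some \<beta>)
        then have "\<beta> \<in> OmegaJe \<Omega> act J (e J)" unfolding OmegaJe_def ee_def using aJ
          by (auto simp: ee_def)
        then have "act \<beta> g = act \<beta> h" using eqa by blast
        then have "act \<alpha> (ee*g) = act \<alpha> (ee*h)" using act_mult_Some[OF a Some] by simp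
        then show ?thesis using eg eh by simp
      qed
    next
      case False
      have Kc: "is_Jclass K" using apex_Jclass[OF K] .
      have "equivRM K g h"
      proof (cases "Jle K J")
        case True
        then have "Jless K J" using False unfolding Jless_def by blast
        then have "equivRM K g ee" "equivRM K h ee" using gM hM apex_regular[OF Ob K] by blast+
        then show ?thesis unfolding equivRM_def by metis
      next
        case notle: False
        have "z*g \<notin> K \<and> z*h \<notin> K" if z: "z \<in> K" for z
        proof -
          have KK: "K = Jclass z" using is_Jclass_mem[OF Kc z] .
          have "z*g \<notin> K"
          proof
            assume "z*g \<in> K"
            then have "leJ z (z*g)" unfolding KK by (simp add: mem_Jclass)
            then have "leJ z ee" using leJ_trans[OF _ leJ_trans[OF leJ_l lg]] by blast
            then show False using notle unfolding KK JJ Jle_Jclass by blast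
          qed
          moreover have "z*h \<notin> K"
          proof
            assume "z*h \<in> K"
            then have "leJ z (z*h)" unfolding KK by (simp add: mem_Jclass)
            then have "leJ z ee" using leJ_trans[OF _ leJ_trans[OF leJ_l lh]] by blast
            then show False using notle unfolding KK JJ Jle_Jclass by blast
          qed
          ultimately show ?thesis by blast
        qed
        then show ?thesis unfolding equivRM_def by blast
      qed
      then show ?thesis using apex_B[OF Ob K _ aO] by blast
    qed
  qed
  then show "g = h" using faith by blast
qed

end



lemma rideal_leJ': "x \<in> lideal a \<Longrightarrow> leJ x a"
  by (auto simp: mem_lideal)

context pss
begin

lemma main_ind:
  fixes e :: "'a set \<Rightarrow> 'a"
  assumes rss: "rhodes_semisimple TYPE('a)"
    and idem: "\<And>J. regularJ J \<Longrightarrow> e J \<in> J \<and> e J * e J = e J"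
    and H: "\<forall>J. RM_irreducible J \<longrightarrow> OmegaJ \<Omega> act J \<noteq> {} \<and>
              faithful_action (OmegaJe \<Omega> act J (e J)) act (MJ e J)"
  shows "regularJ J \<Longrightarrow> rel s t \<Longrightarrow> equivRM J s t"
proof (induction "card (ideal2 J)" arbitrary: J s t rule: less_induct)
  case less
  have regJ: "regularJ J" and rst: "rel s t" using less.prems by blast+
  have Jc: "is_Jclass J" using regJ unfolding regularJ_def by blast
  have IH': "equivRM K s' t'" if "regularJ K" "Jless K J" "rel s' t'" for K s' t'
  proof -
    have "is_Jclass K" using that(1) unfolding regularJ_def by blast
    then have "card (ideal2 K) < card (ideal2 J)" using Jless_card Jc that(2) by blast
    then show ?thesis using less.hyps that(1,3) by blast
  qed
  show "equivRM J s t"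
  proof (cases "RM_irreducible J")
    case False
    then have "\<forall>s t. (\<forall>J'. regularJ J' \<and> Jless J' J \<longrightarrow> equivRM J' s t) \<longrightarrow> equivRM J s t"
      using regJ unfolding RM_irreducible_def by blast
    then show ?thesis using IH' rst by blast
  next
    case True
    define ee where "ee = e J"
    have ee: "ee \<in> J" "ee*ee = ee" using idem[OF regJ] unfolding ee_def by simp_all
    have JJ: "J = Jclass ee" using is_Jclass_mem[OF Jc ee(1)] .
    have inJ: "u \<in> J \<longleftrightarrow> leJ ee u \<and> leJ u ee" for u unfolding JJ by (simp add: mem_Jclass)
    have HJ: "OmegaJ \<Omega> act J \<noteq> {}" "faithful_action (OmegaJe \<Omega> act J ee) act (MJ e J)"
      using H True unfolding ee_def by blast+
    obtain Ob where Ob: "Ob \<in> strong_orbits \<Omega> act" "is_apex act Ob J"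
      using HJ(1) unfolding OmegaJ_def by blast
    have ObO: "Ob \<subseteq> \<Omega>" using orb_sub[OF Ob(1)] .
    have relJ: "leJ ee v" if u: "u \<in> J" and ruv: "rel u v" for u v
    proof -
      obtain \<beta> where b: "\<beta>\<in>Ob" "act \<beta> u \<noteq> None" using apex_act[OF Ob u] by blast
      have "act \<beta> v = act \<beta> u" using ruv b(1) ObO unfolding rel_def by auto
      then have "act \<beta> v \<noteq> None" using b(2) by simp
      then show ?thesis using apex_le[OF Ob ee(1) b(1)] by blast
    qed
    have OJsub: "OmegaJ \<Omega> act J \<subseteq> \<Omega>" unfolding OmegaJ_def using orb_sub by blast
    have OJesub: "OmegaJe \<Omega> act J ee \<subseteq> \<Omega>"
    proof
      fix \<alpha> assume "\<alpha> \<in> OmegaJe \<Omega> act J ee"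
      then obtain \<alpha>0 where "\<alpha>0 \<in> OmegaJ \<Omega> act J" "act \<alpha>0 ee = Some \<alpha>" unfolding OmegaJe_def by blast
      then show "\<alpha> \<in> \<Omega>" using OJsub act_closed by blast
    qed
    have GT: "h = ee" if h1: "h = ee*h*ee" and h2: "rel h ee" for h
    proof -
      have h1': "h = ee*(h*ee)" using h1[unfolded mult.assoc] .
      have "leJ ee h" using relJ[OF ee(1) rel_sym[OF h2]] .
      moreover have "leJ h ee" using h1' leJ_r[of ee "h*ee"] by simp
      ultimately have hJ: "h \<in> J" using inJ by blast
      have r1: "ee \<in> rideal h" using stab_R'[OF h1' \<open>leJ ee h\<close>] .
      have r2: "h \<in> rideal ee" using h1' rideal_m(1)[of ee "h*ee"] by simp
      have l1: "ee \<in> lideal h" using stab_L'[OF h1 \<open>leJ ee h\<close>] .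
      have l2: "h \<in> lideal ee" using h1 lideal_m(1)[of "ee*h" ee] by simp
      have hH: "h \<in> Hgroup ee" unfolding Hgroup_def using r1 r2 l1 l2 rideal_eq lideal_eq by blast
      have hM: "h \<in> MJ e J" unfolding MJ_def using hH IH' h2 unfolding ee_def by blast
      have eM: "ee \<in> MJ e J" unfolding MJ_def Hgroup_def equivRM_def ee_def by blast
      have "\<forall>\<alpha>\<in>OmegaJe \<Omega> act J ee. act \<alpha> h = act \<alpha> ee" using h2 OJesub unfolding rel_def by blast
      then show "h = ee" using HJ(2) hM eM unfolding faithful_action_def by blast
    qed
    have G2: "w = w'" if w: "w \<in> J" and r: "w' \<in> rideal w" and l: "w' \<in> lideal w" and rw: "rel w w'" for w w'
    proof -
      have "leJ ee w" using w inJ by blast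
      then obtain p q where pq: "ee = p*w*q" "p = ee*p" "q = q*ee" using sandwich_idem[OF ee(2)] by blast
      have "rel (p*w'*q) (p*w*q)" using rel_right[OF rel_left[OF rel_sym[OF rw]]] .
      then have r2: "rel (p*w'*q) ee" using pq(1) by simp
      have "ee*(p*w'*q)*ee = (ee*p)*w'*(q*ee)" by (simp add: mult.assoc)
      also have "\<dots> = p*w'*q" by (simp only: pq(2)[symmetric] pq(3)[symmetric])
      finally have "p*w'*q = ee*(p*w'*q)*ee" by (rule sym)
      then have pwq': "p*w'*q = ee" using GT r2 by blast
      have "leJ ee (w*q)" using pq(1) leJ_l[of p "w*q"] by (simp add: mult.assoc)
      moreover have "leJ (w*q) ee" using w inJ leJ_rT by blast
      ultimately have "leJ w (w*q)" using w inJ leJ_trans by blast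
      then have wR: "w \<in> rideal (w*q)" by (rule stab_R)
      have key: "w*q*p*w*q = w*q"
      proof -
        have "w*q*p*w*q = w*(q*(p*w*q))" by (simp add: mult.assoc)
        also have "\<dots> = w*(q*ee)" by (simp only: pq(1)[symmetric])
        also have "\<dots> = w*q" by (simp only: pq(3)[symmetric])
        finally show ?thesis .
      qed
      have A: "w*q*p*w = w"
        using wR unfolding mem_rideal
      proof (elim disjE exE)
        assume eq: "w = w*q"
        have "w*q*p*w = w*q*p*(w*q)" using eq by (rule arg_cong[where f="\<lambda>z. w*q*p*z"])
        also have "\<dots> = w*q*p*w*q" by (simp add: mult.assoc)
        also have "\<dots> = w*q" by (rule key)
        also have "\<dots> = w" by (rule eq[symmetric])
        finally show ?thesis .
      next
        fix y assume eq: "w = w*q*y"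
        have "w*q*p*w = w*q*p*(w*q*y)" using eq by (rule arg_cong[where f="\<lambda>z. w*q*p*z"])
        also have "\<dots> = (w*q*p*w*q)*y" by (simp add: mult.assoc)
        also have "\<dots> = w*q*y" by (simp only: key)
        also have "\<dots> = w" by (rule eq[symmetric])
        finally show ?thesis .
      qed
      have B: "w*q*p*w' = w'"
        using r unfolding mem_rideal
      proof (elim disjE exE)
        assume "w' = w" then show ?thesis using A by simp
      next
        fix y assume eq: "w' = w*y"
        have "w*q*p*(w*y) = (w*q*p*w)*y" by (simp add: mult.assoc)
        also have "\<dots> = w*y" by (simp only: A)
        finally show ?thesis using eq by simp
      qed
      have C: "w'*q*p*w = w'"
        using l unfolding mem_lideal
      proof (elim disjE exE)
        assume "w' = w" then show ?thesis using A by simp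
      next
        fix y assume eq: "w' = y*w"
        have "y*w*q*p*w = y*(w*q*p*w)" by (simp add: mult.assoc)
        also have "\<dots> = y*w" by (simp only: A)
        finally show ?thesis using eq by simp
      qed
      have "w = w*q*p*w" using A by simp
      also have "\<dots> = w*q*p*(w*q*p*w)" using A by simp
      also have "\<dots> = w*q*(p*w*q)*p*w" by (simp add: mult.assoc)
      also have "\<dots> = w*q*(p*w'*q)*p*w" by (simp only: pq(1)[symmetric] pwq')
      also have "\<dots> = (w*q*p*w')*(q*p*w)" by (simp add: mult.assoc)
      also have "\<dots> = w'*(q*p*w)" by (simp only: B)
      also have "\<dots> = w'*q*p*w" by (simp add: mult.assoc)
      also have "\<dots> = w'" by (rule C)
      finally show ?thesis .
    qed
    have Sym: "u*b = v*b" if ruv: "rel u v" and u: "u \<in> J" and vu: "v \<in> rideal u"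
      and b: "b \<in> J" and ub: "u*b \<in> J" for u v b
    proof -
      have "leJ u (u*b)" using u ub inJ leJ_trans by blast
      then have "u \<in> rideal (u*b)" by (rule stab_R)
      then have r: "v*b \<in> rideal (u*b)" using vu rideal_m(1)[of v b] rideal_trans by blast
      have "leJ b (u*b)" using b ub inJ leJ_trans by blast
      then have "b \<in> lideal (u*b)" by (rule stab_L)
      then have l: "v*b \<in> lideal (u*b)" using lideal_m(1)[of v b] lideal_trans by blast
      show ?thesis using G2[OF ub r l rel_right[OF ruv]] .
    qed
    have M: "x*t' \<in> J \<and> x*s' = x*t'" if rst': "rel s' t'" and x: "x \<in> J" and xs: "x*s' \<in> J" for x s' t'
    proof -
      have ruv: "rel (x*s') (x*t')" by (rule rel_left[OF rst'])
      have "leJ ee (x*t')" using relJ[OF xs ruv] .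
      moreover have "leJ (x*t') ee" using x inJ leJ_rT by blast
      ultimately have vJ: "x*t' \<in> J" using inJ by blast
      have "leJ x (x*s')" using x xs inJ leJ_trans by blast
      then have "x \<in> rideal (x*s')" by (rule stab_R)
      then have vu: "x*t' \<in> rideal (x*s')" using rideal_m(1)[of x t'] rideal_trans by blast
      have "leJ x (x*t')" using x vJ inJ leJ_trans by blast
      then have "x \<in> rideal (x*t')" by (rule stab_R)
      then have uv: "x*s' \<in> rideal (x*t')" using rideal_m(1)[of x s'] rideal_trans by blast
      have "\<forall>K. regularJ K \<longrightarrow> equivJ K (x*s') (x*t')"
      proof (intro allI impI)
        fix K :: "'a set" assume regK: "regularJ K"
        have Kc: "is_Jclass K" using regK unfolding regularJ_def by blast
        show "equivJ K (x*s') (x*t')"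
        proof (cases "K = J")
          case True
          show ?thesis unfolding True equivJ_def
          proof (intro ballI)
            fix a b assume a: "a \<in> J" and b: "b \<in> J"
            have P1: "a*(x*s')*b \<in> J \<Longrightarrow> x*s'*b \<in> J \<and> a*(x*s')*b = a*(x*t')*b"
            proof -
              assume h: "a*(x*s')*b \<in> J"
              have "leJ ee (a*(x*s')*b)" using h inJ by blast
              moreover have "leJ (a*(x*s')*b) (x*s'*b)" using leJ_l[of a "x*s'*b"] by (simp add: mult.assoc)
              ultimately have "leJ ee (x*s'*b)" using leJ_trans by blast
              moreover have "leJ (x*s'*b) ee" using xs inJ leJ_rT by blast
              ultimately have ubJ: "x*s'*b \<in> J" using inJ by blast
              have "x*s'*b = x*t'*b" using Sym[OF ruv xs vu b ubJ] .
              then show ?thesis using ubJ by (simp add: mult.assoc)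
            qed
            have P2: "a*(x*t')*b \<in> J \<Longrightarrow> x*t'*b \<in> J \<and> a*(x*t')*b = a*(x*s')*b"
            proof -
              assume h: "a*(x*t')*b \<in> J"
              have "leJ ee (a*(x*t')*b)" using h inJ by blast
              moreover have "leJ (a*(x*t')*b) (x*t'*b)" using leJ_l[of a "x*t'*b"] by (simp add: mult.assoc)
              ultimately have "leJ ee (x*t'*b)" using leJ_trans by blast
              moreover have "leJ (x*t'*b) ee" using vJ inJ leJ_rT by blast
              ultimately have vbJ: "x*t'*b \<in> J" using inJ by blast
              have "x*t'*b = x*s'*b" using Sym[OF rel_sym[OF ruv] vJ uv b vbJ] .
              then show ?thesis using vbJ by (simp add: mult.assoc)
            qed
            show "(a * (x * s') * b \<in> J) = (a * (x * t') * b \<in> J) \<and>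
                  (a * (x * s') * b \<in> J \<longrightarrow> a * (x * s') * b = a * (x * t') * b)"
              using P1 P2 by metis
          qed
        next
          case False
          show ?thesis
          proof (cases "Jle K J")
            case True
            then have lt: "Jless K J" using False unfolding Jless_def by blast
            have "equivRM K (x*s'*y) (x*t'*y)" for y using IH'[OF regK lt rel_right[OF ruv]] .
            then show ?thesis by (rule equivJ_from_RM)
          next
            case notle: False
            have nin: "a*c*b \<notin> K" if a: "a \<in> K" and c: "c \<in> J" for a b c
            proof
              assume h: "a*c*b \<in> K"
              have KK: "K = Jclass a" using is_Jclass_mem[OF Kc a] .
              have "leJ a (a*c*b)" using h unfolding KK by (simp add: mem_Jclass)
              moreover have "leJ (a*c*b) c" by simp
              moreover have "leJ c ee" using c inJ by blast
              ultimately have "leJ a ee" using leJ_trans by blast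
              then show False using notle unfolding KK JJ Jle_Jclass by blast
            qed
            show ?thesis unfolding equivJ_def using nin xs vJ by blast
          qed
        qed
      qed
      then have "x*s' = x*t'" using rss unfolding rhodes_semisimple_def by blast
      then show ?thesis using vJ by blast
    qed
    show "equivRM J s t" unfolding equivRM_def
    proof (intro ballI conjI impI)
      fix x assume x: "x \<in> J"
      show "(x*s \<in> J) = (x*t \<in> J)" using M[OF rst x] M[OF rel_sym[OF rst] x] by blast
      show "x*s \<in> J \<Longrightarrow> x*s = x*t" using M[OF rst x] by blast
    qed
  qed
qed

end

theorem theorem2p4:
  fixes \<Omega> :: "'b set"
    and act :: "'b \<Rightarrow> 'a::{semigroup_mult, finite} \<Rightarrow> 'b option"
    and e :: "'a set \<Rightarrow> 'a"
  assumes rss: "rhodes_semisimple TYPE('a)"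
    and idem: "\<And>J. regularJ J \<Longrightarrow> e J \<in> J \<and> e J * e J = e J"
    and Sset: "partial_Sset \<Omega> act"
    and ss: "semisimple_Sset \<Omega> act"
  shows "faithful_action \<Omega> act UNIV \<longleftrightarrow>
    (\<forall>J. RM_irreducible J \<longrightarrow>
       OmegaJ \<Omega> act J \<noteq> {} \<and>
       faithful_action (OmegaJe \<Omega> act J (e J)) act (MJ e J))"
proof -
  interpret pss \<Omega> act using Sset ss by unfold_locales
  have fa: "faithful_action \<Omega> act UNIV \<longleftrightarrow> (\<forall>s t. rel s t \<longrightarrow> s = t)"
    unfolding faithful_action_def rel_def by blast
  show ?thesis
  proof
    assume "faithful_action \<Omega> act UNIV"
    then have faith: "\<forall>s t. rel s t \<longrightarrow> s = t" using fa by blast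
    show "\<forall>J. RM_irreducible J \<longrightarrow> OmegaJ \<Omega> act J \<noteq> {} \<and>
       faithful_action (OmegaJe \<Omega> act J (e J)) act (MJ e J)"
    proof (intro allI impI conjI)
      fix J :: "'a set" assume irr: "RM_irreducible J"
      show "OmegaJ \<Omega> act J \<noteq> {}" using forward1[OF faith irr] .
      have "regularJ J" using irr unfolding RM_irreducible_def by blast
      then show "faithful_action (OmegaJe \<Omega> act J (e J)) act (MJ e J)"
        using forward2[where e=e, OF faith irr idem] by blast
    qed
  next
    assume H: "\<forall>J. RM_irreducible J \<longrightarrow> OmegaJ \<Omega> act J \<noteq> {} \<and>
       faithful_action (OmegaJe \<Omega> act J (e J)) act (MJ e J)"
    have "\<forall>s t. rel s t \<longrightarrow> s = t"
    proof (intro allI impI)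
      fix s t :: 'a assume rst: "rel s t"
      have "\<forall>J. regularJ J \<longrightarrow> equivJ J s t"
      proof (intro allI impI)
        fix J :: "'a set" assume regJ: "regularJ J"
        have "equivRM J (s*y) (t*y)" for y
          using main_ind[OF rss idem H regJ rel_right[OF rst]] .
        then show "equivJ J s t" by (rule equivJ_from_RM)
      qed
      then show "s = t" using rss unfolding rhodes_semisimple_def by blast
    qed
    then show "faithful_action \<Omega> act UNIV" using fa by blast
  qed
qed


end
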